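(* Let $d\geq 2$ be even and $E,F\subset\mathbb F_q^d$. Then $$|\nu(0)|\leq q^{-1}|E||F|+2q^{d/2}|E|^{1/2}|F|^{1/2}.$$
   Context: $\mathbb F_q$ is a finite field with $q$ elements, of characteristic greater than two. For $m\in\mathbb F_q^d$, $\|m\|=m_1^2+\dots+m_d^2$, and $\nu(0)=|\{(x,y)\in E\times F:\|x-y\|=0\}|$. *)

theory Defs
  imports "HOL-Analysis.Analysis"
begin

text \<open>The "norm" of the paper: sum of squares of coordinates, a value in the field.\<close>
definition sqnorm :: "'a::comm_ring_1 ^ 'n \<Rightarrow> 'a" where
  "sqnorm m = (\<Sum>i\<in>UNIV. (m $ i) ^ 2)"

definition nu0 :: "('a::comm_ring_1 ^ 'n) set \<Rightarrow> ('a ^ 'n) set \<Rightarrow> nat" where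
  "nu0 E F = card {(x, y). x \<in> E \<and> y \<in> F \<and> sqnorm (x - y) = 0}"

end

theory Submission
  imports Defs "HOL-Computational_Algebra.Primes"
begin


lemma sg_int_mult:
  fixes H :: "'a::ring_1 set"
  assumes "0 \<in> H" "\<forall>x\<in>H. \<forall>y\<in>H. x + y \<in> H" "\<forall>x\<in>H. -x \<in> H" "h \<in> H"
  shows "of_int k * h \<in> H"
proof -
  have nat: "of_nat n * h \<in> H" for n
    by (induction n) (use assms in \<open>auto simp: distrib_right\<close>)
  show ?thesis
  proof (cases "k \<ge> 0")
    case True
    then show ?thesis using nat[of "nat k"] by (metis of_int_of_nat_eq int_nat_eq)
  next
    case False
    then have "of_int k * h = - (of_nat (nat (-k)) * h)"
      by (metis add.inverse_inverse int_nat_eq minus_mult_left nat_0_le neg_0_le_iff_le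
          nle_le of_int_minus of_int_of_nat_eq)
    then show ?thesis using nat assms(3) by auto
  qed
qed

lemma cis_cong_p:
  fixes p :: nat and k k' :: int
  assumes "p > 0" "int p dvd (k - k')"
  shows "cis (2 * pi * of_int k / p) = cis (2 * pi * of_int k' / p)"
proof -
  obtain m where m: "k - k' = int p * m" using assms by (auto simp: dvd_def)
  have "2 * pi * of_int k / p = 2 * pi * of_int k' / p + 2 * pi * of_int m"
    using m assms by (simp add: field_simps)
  then show ?thesis
    by (simp add: cis_mult[symmetric])
qed

lemma bezout_p: "prime (p::nat) \<Longrightarrow> \<not> int p dvd j \<Longrightarrow> \<exists>u v. u * j + v * int p = 1"
proof -
  assume pp: "prime p" and nd: "\<not> int p dvd j"
  have "coprime (int p) j" using prime_imp_coprime[of "int p" j] pp nd by simp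
  then have "gcd j (int p) = 1" by (simp add: coprime_iff_gcd_eq_1 gcd.commute)
  then show ?thesis using bezout_int[of j "int p"] by simp
qed

lemma exists_char:
  assumes "CHAR('a::{finite,field}) > 2"
  shows "\<exists>\<psi>::'a \<Rightarrow> complex. (\<forall>x y. \<psi> (x+y) = \<psi> x * \<psi> y) \<and> (\<forall>x. norm (\<psi> x) = 1) \<and> (\<exists>a. \<psi> a \<noteq> 1)"
proof -
  define p where "p = CHAR('a)"
  have pp: "prime p" unfolding p_def using assms prime_CHAR_semidom[where ?'a='a] by auto
  have p0: "p > 0" using pp prime_gt_0_nat by blast
  define sg where "sg H \<longleftrightarrow> 0\<in>H \<and> (\<forall>x\<in>H. \<forall>y\<in>H. x+y \<in> H) \<and> (\<forall>x\<in>H. -x \<in> H)" for H :: "'a set"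
  have s0: "sg {0}" by (simp add: sg_def)
  have s1: "{0} \<noteq> (UNIV :: 'a set)"
  proof
    assume "{0} = (UNIV :: 'a set)"
    then have "(1::'a) \<in> {0}" by simp
    then show False by simp
  qed
  have bnd: "\<forall>H. sg H \<and> H \<noteq> UNIV \<longrightarrow> card H < CARD('a) + 1"
    by (simp add: card_mono less_Suc_eq_le)
  have "\<exists>H. (sg H \<and> H \<noteq> UNIV) \<and> (\<forall>y. sg y \<and> y \<noteq> UNIV \<longrightarrow> card y \<le> card H)"
    by (rule ex_has_greatest_nat[of "\<lambda>H. sg H \<and> H \<noteq> UNIV" "{0}" card "CARD('a)+1"]) (use s0 s1 bnd in auto)
  then obtain H where H: "sg H" "H \<noteq> UNIV"
     and Hmax: "\<And>H'. sg H' \<and> H' \<noteq> UNIV \<Longrightarrow> card H' \<le> card H"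
    by blast
  obtain a where a: "a \<notin> H" using H(2) by auto
  have mult: "h \<in> H \<Longrightarrow> of_int k * h \<in> H" for h k
    using sg_int_mult[of H h k] H(1) unfolding sg_def by blast
  define H' where "H' = {h + of_int k * a | h k. h \<in> H}"
  have "sg H'"
    unfolding sg_def H'_def
  proof (intro conjI ballI)
    have "0 \<in> H" using H(1) unfolding sg_def by blast
    then show "0 \<in> {h + of_int k * a |h k. h \<in> H}" by (intro CollectI exI[of _ 0] exI[of _ "0::int"]) simp
  next
    fix x y assume "x \<in> {h + of_int k * a |h k. h \<in> H}" "y \<in> {h + of_int k * a |h k. h \<in> H}"
    then obtain h1 k1 h2 k2 where "h1 \<in> H" "h2 \<in> H" "x = h1 + of_int k1 * a" "y = h2 + of_int k2 * a" by auto
    then show "x + y \<in> {h + of_int k * a |h k. h \<in> H}"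
    proof -
      have "h1 + h2 \<in> H" using H(1) \<open>h1 \<in> H\<close> \<open>h2 \<in> H\<close> unfolding sg_def by blast
      moreover have "x + y = (h1 + h2) + of_int (k1 + k2) * a" using \<open>x = _\<close> \<open>y = _\<close> by (simp add: algebra_simps)
      ultimately show ?thesis by blast
    qed
  next
    fix x assume "x \<in> {h + of_int k * a |h k. h \<in> H}"
    then obtain h1 k1 where "h1 \<in> H" "x = h1 + of_int k1 * a" by auto
    then show "-x \<in> {h + of_int k * a |h k. h \<in> H}"
    proof -
      have "-h1 \<in> H" using H(1) \<open>h1 \<in> H\<close> unfolding sg_def by blast
      moreover have "-x = (-h1) + of_int (-k1) * a" using \<open>x = _\<close> by (simp add: algebra_simps)
      ultimately show ?thesis by blast
    qed
  qed
  have "H \<subset> H'"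
  proof
    show "H \<subseteq> H'"
    proof
      fix h assume "h \<in> H"
      then show "h \<in> H'" unfolding H'_def by (intro CollectI exI[of _ h] exI[of _ "0::int"]) simp
    qed
    have "0 \<in> H" using H(1) unfolding sg_def by blast
    then have "a \<in> H'" unfolding H'_def by (intro CollectI exI[of _ 0] exI[of _ "1::int"]) simp
    then show "H \<noteq> H'" using a by auto
  qed
  then have "card H < card H'" by (simp add: psubset_card_mono)
  then have H'U: "H' = UNIV" using Hmax[of H'] \<open>sg H'\<close> by (meson not_le)
  have key: "of_int j * a \<in> H \<Longrightarrow> int p dvd j" for j
  proof (rule ccontr)
    assume ja: "of_int j * a \<in> H" and nd: "\<not> int p dvd j"
    obtain u v where uv: "u * j + v * int p = 1" using bezout_p[OF pp nd] by blast
    have p0': "(of_int (int p) :: 'a) = 0" unfolding p_def by simp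
    have "a = of_int (u * j + v * int p) * a" using uv by simp
    also have "\<dots> = of_int u * (of_int j * a) + of_int v * (of_int (int p) * a)"
      by (simp only: of_int_add of_int_mult distrib_right mult.assoc)
    also have "\<dots> = of_int u * (of_int j * a)" using p0' by simp
    finally have "a = of_int u * (of_int j * a)" .
    then show False using mult[OF ja, of u] a by metis
  qed
  have uniq: "int p dvd (k - k')" if "x = h + of_int k * a" "x = h' + of_int k' * a" "h \<in> H" "h' \<in> H" for x h h' k k'
  proof -
    have "of_int (k - k') * a = h' + (- h)" using that by (simp add: algebra_simps)
    also have "\<dots> \<in> H" using H(1) that unfolding sg_def by blast
    finally show ?thesis using key by blast
  qed
  define kk where "kk x = (SOME k. \<exists>h\<in>H. x = h + of_int k * a)" for x
  have kk: "\<exists>h\<in>H. x = h + of_int (kk x) * a" for x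
  proof -
    have "x \<in> H'" using H'U by auto
    then have "\<exists>k. \<exists>h\<in>H. x = h + of_int k * a" unfolding H'_def by auto
    then show ?thesis unfolding kk_def by (rule someI_ex)
  qed
  define \<psi> where "\<psi> x = cis (2 * pi * of_int (kk x) / p)" for x
  have add: "\<psi> (x + y) = \<psi> x * \<psi> y" for x y
  proof -
    obtain hx where hx: "hx \<in> H" "x = hx + of_int (kk x) * a" using kk by blast
    obtain hy where hy: "hy \<in> H" "y = hy + of_int (kk y) * a" using kk by blast
    obtain hz where hz: "hz \<in> H" "x + y = hz + of_int (kk (x+y)) * a" using kk by blast
    have "x + y = (hx + of_int (kk x) * a) + (hy + of_int (kk y) * a)"
      using hx(2) hy(2) by (rule arg_cong2[where f="(+)"])
    also have "\<dots> = (hx + hy) + of_int (kk x + kk y) * a" by (simp add: algebra_simps)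
    finally have "x + y = (hx + hy) + of_int (kk x + kk y) * a" .
    moreover have "hx + hy \<in> H" using H(1) hx hy unfolding sg_def by blast
    ultimately have "int p dvd (kk (x+y) - (kk x + kk y))" using uniq hz by blast
    then have "\<psi> (x+y) = cis (2 * pi * of_int (kk x + kk y) / p)"
      unfolding \<psi>_def using cis_cong_p p0 by blast
    also have "\<dots> = \<psi> x * \<psi> y" unfolding \<psi>_def by (simp add: cis_mult add_divide_distrib distrib_left)
    finally show ?thesis .
  qed
  have "\<psi> a \<noteq> 1"
  proof
    assume A: "\<psi> a = 1"
    obtain ha where ha: "ha \<in> H" "a = ha + of_int (kk a) * a" using kk by blast
    have "a = 0 + of_int 1 * a" by simp
    then have "int p dvd (kk a - 1)" using uniq ha H(1) unfolding sg_def by blast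
    then have "\<psi> a = cis (2 * pi * of_int 1 / p)" unfolding \<psi>_def using cis_cong_p p0 by blast
    then have "cos (2 * pi / p) = 1" using A by (metis Re_complex_of_real cis.sel(1) mult.right_neutral of_int_1 one_complex.sel(1))
    then obtain n :: int where n: "2 * pi / real p = real_of_int n * 2 * pi" using cos_one_2pi_int by blast
    then have "real_of_int n = 1 / real p" using pi_gt_zero p0 by (simp add: field_simps)
    moreover have "p \<ge> 3" using assms p_def by auto
    moreover have "0 < 1 / real p" "1 / real p < 1" using \<open>p \<ge> 3\<close> by auto
    ultimately have "0 < real_of_int n" "real_of_int n < 1" by auto
    then show False by simp
  qed
  then show ?thesis using add by (auto intro!: exI[of _ \<psi>] simp: \<psi>_def)
qed





lemma sqnorm_diff:
  fixes x y y' :: "'a::comm_ring_1 ^ 'n"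
  shows "sqnorm (x - y) - sqnorm (x - y') = sqnorm y - sqnorm y' + 2 * (\<Sum>i\<in>UNIV. x$i * (y'$i - y$i))"
proof -
  have e: "(x$i - y$i)^2 - (x$i - y'$i)^2 = (y$i^2 - y'$i^2) + 2*(x$i*(y'$i - y$i))" for i
    by (simp add: power2_eq_square algebra_simps)
  have "sqnorm (x - y) - sqnorm (x - y') = (\<Sum>i\<in>UNIV. (x$i - y$i)^2 - (x$i - y'$i)^2)"
    unfolding sqnorm_def by (simp add: sum_subtractf)
  also have "\<dots> = (\<Sum>i\<in>UNIV. (y$i^2 - y'$i^2) + 2*(x$i*(y'$i - y$i)))" using e by simp
  also have "\<dots> = sqnorm y - sqnorm y' + 2 * (\<Sum>i\<in>UNIV. x$i * (y'$i - y$i))"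
    unfolding sqnorm_def by (simp add: sum.distrib sum_subtractf sum_distrib_left)
  finally show ?thesis .
qed

context
  fixes \<psi> :: "'a::{finite,field} \<Rightarrow> complex"
  assumes hom: "\<And>x y. \<psi> (x+y) = \<psi> x * \<psi> y" and nrm: "\<And>x. norm (\<psi> x) = 1"
begin

lemma psi0: "\<psi> 0 = 1"
proof -
  have "\<psi> 0 * 1 = \<psi> 0 * \<psi> 0" using hom[of 0 0] by simp
  moreover have "\<psi> 0 \<noteq> 0" using nrm[of 0] by auto
  ultimately show ?thesis by (metis mult_cancel_left)
qed

lemma psi_neg: "\<psi> (-x) = cnj (\<psi> x)"
proof -
  have "\<psi> x * \<psi> (-x) = 1" using hom[of x "-x"] psi0 by simp
  moreover have "\<psi> x * cnj (\<psi> x) = 1" using complex_norm_square[of "\<psi> x"] nrm[of x] by simp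
  moreover have "\<psi> x \<noteq> 0" using nrm[of x] by auto
  ultimately show ?thesis by (metis mult_cancel_left)
qed

lemma sum_vanish:
  fixes L :: "'v::{finite,ab_group_add} \<Rightarrow> 'a"
  assumes "\<And>x y. L (x + y) = L x + L y" "\<psi> (L w) \<noteq> 1"
  shows "(\<Sum>x\<in>UNIV. \<psi> (L x)) = 0"
proof -
  have b: "bij_betw (\<lambda>x. x + w) UNIV UNIV" by (rule bij_betwI[where g="\<lambda>x. x - w"]) auto
  have "(\<Sum>x\<in>UNIV. \<psi> (L x)) = (\<Sum>x\<in>UNIV. \<psi> (L (x + w)))"
    using sum.reindex_bij_betw[OF b, of "\<lambda>x. \<psi> (L x)"] by simp
  also have "\<dots> = \<psi> (L w) * (\<Sum>x\<in>UNIV. \<psi> (L x))"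
    by (simp add: assms(1) hom sum_distrib_left mult.commute)
  finally have "(1 - \<psi> (L w)) * (\<Sum>x\<in>UNIV. \<psi> (L x)) = 0" by (simp add: algebra_simps)
  then show ?thesis using assms(2) by simp
qed

lemma orth_scalar:
  assumes "\<psi> a \<noteq> 1"
  shows "(\<Sum>t\<in>UNIV. \<psi> (t * u)) = (if u = 0 then of_nat CARD('a) else 0)"
proof (cases "u = 0")
  case True then show ?thesis using psi0 by simp
next
  case False
  have "(\<Sum>t\<in>UNIV. \<psi> (t * u)) = 0"
    by (rule sum_vanish[where w="a / u"]) (use False assms in \<open>auto simp: distrib_right\<close>)
  then show ?thesis using False by simp
qed

lemma orth_vec:
  assumes "\<psi> a \<noteq> 1" "c \<noteq> 0" "(v::'a^'n) \<noteq> 0"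
  shows "(\<Sum>x\<in>UNIV. \<psi> (c * (\<Sum>i\<in>UNIV. x$i * v$i))) = 0"
proof -
  obtain j where j: "v$j \<noteq> 0" using assms(3) by (metis vec_eq_iff zero_index)
  define w :: "'a^'n" where "w = (\<chi> i. if i = j then a / (c * v$j) else 0)"
  have "(\<Sum>i\<in>UNIV. w$i * v$i) = (\<Sum>i\<in>UNIV. if i = j then a / (c * v$j) * v$j else 0)"
    unfolding w_def by (intro sum.cong) auto
  also have "\<dots> = a / (c * v$j) * v$j" by simp
  finally have "(\<Sum>i\<in>UNIV. w$i * v$i) = a / (c * v$j) * v$j" .
  then have wa: "c * (\<Sum>i\<in>UNIV. w$i * v$i) = a" using assms j by (simp add: field_simps)
  show ?thesis
    by (rule sum_vanish[where w=w]) (use wa assms in \<open>auto simp: distrib_right sum.distrib distrib_left\<close>)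
qed

lemma inner:
  fixes y y' :: "'a^'n"
  assumes "\<psi> a \<noteq> 1" "t \<noteq> 0" "(2::'a) \<noteq> 0"
  shows "(\<Sum>x\<in>UNIV. \<psi> (t * sqnorm (x - y) - t * sqnorm (x - y'))) = (if y = y' then of_nat CARD('a^'n) else 0)"
proof (cases "y = y'")
  case True then show ?thesis using psi0 by simp
next
  case False
  have "(\<Sum>x\<in>UNIV. \<psi> (t * sqnorm (x - y) - t * sqnorm (x - y'))) =
        (\<Sum>x\<in>UNIV. \<psi> (t * (sqnorm y - sqnorm y')) * \<psi> ((2*t) * (\<Sum>i\<in>UNIV. x$i * (y' - y)$i)))"
  proof (rule sum.cong[OF refl])
    fix x
    have "t * sqnorm (x - y) - t * sqnorm (x - y') = t * (sqnorm y - sqnorm y') + (2*t) * (\<Sum>i\<in>UNIV. x$i * (y' - y)$i)"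
      using arg_cong[OF sqnorm_diff[of x y y'], of "\<lambda>z. t * z"] by (simp add: algebra_simps)
    then show "\<psi> (t * sqnorm (x - y) - t * sqnorm (x - y')) = \<psi> (t * (sqnorm y - sqnorm y')) * \<psi> ((2*t) * (\<Sum>i\<in>UNIV. x$i * (y' - y)$i))"
      by (simp add: hom)
  qed
  also have "\<dots> = \<psi> (t * (sqnorm y - sqnorm y')) * (\<Sum>x\<in>UNIV. \<psi> ((2*t) * (\<Sum>i\<in>UNIV. x$i * (y' - y)$i)))"
    by (simp add: sum_distrib_left)
  also have "\<dots> = 0"
    using orth_vec[of a "2*t" "y' - y"] assms False by simp
  finally show ?thesis using False by simp
qed


lemma key_sq:
  fixes F :: "('a^'n) set"
  assumes "\<psi> a \<noteq> 1" "t \<noteq> 0" "(2::'a) \<noteq> 0"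
  shows "(\<Sum>x\<in>UNIV. (cmod (\<Sum>y\<in>F. \<psi> (t * sqnorm (x - y))))^2) = real CARD('a^'n) * real (card F)"
proof -
  define g where "g x = (\<Sum>y\<in>F. \<psi> (t * sqnorm (x - y)))" for x
  have "complex_of_real (\<Sum>x\<in>UNIV. (cmod (g x))^2) = (\<Sum>x\<in>UNIV. g x * cnj (g x))"
    by (simp only: of_real_sum complex_norm_square)
  also have "\<dots> = (\<Sum>x\<in>UNIV. \<Sum>y\<in>F. \<Sum>y'\<in>F. \<psi> (t * sqnorm (x - y) - t * sqnorm (x - y')))"
  proof (rule sum.cong[OF refl])
    fix x
    have "g x * cnj (g x) = (\<Sum>y\<in>F. \<Sum>y'\<in>F. \<psi> (t * sqnorm (x - y)) * cnj (\<psi> (t * sqnorm (x - y'))))"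
      unfolding g_def cnj_sum by (rule sum_product)
    also have "\<dots> = (\<Sum>y\<in>F. \<Sum>y'\<in>F. \<psi> (t * sqnorm (x - y) - t * sqnorm (x - y')))"
      by (simp add: psi_neg[symmetric] hom[symmetric])
    finally show "g x * cnj (g x) = (\<Sum>y\<in>F. \<Sum>y'\<in>F. \<psi> (t * sqnorm (x - y) - t * sqnorm (x - y')))" .
  qed
  also have "\<dots> = (\<Sum>y\<in>F. \<Sum>x\<in>UNIV. \<Sum>y'\<in>F. \<psi> (t * sqnorm (x - y) - t * sqnorm (x - y')))"
    by (rule sum.swap)
  also have "\<dots> = (\<Sum>y\<in>F. \<Sum>y'\<in>F. \<Sum>x\<in>UNIV. \<psi> (t * sqnorm (x - y) - t * sqnorm (x - y')))"
    by (rule sum.cong[OF refl], rule sum.swap)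
  also have "\<dots> = (\<Sum>y\<in>F. \<Sum>y'\<in>F. (if y = y' then of_nat CARD('a^'n) else 0))"
    by (intro sum.cong refl) (rule inner[OF assms])
  also have "\<dots> = (\<Sum>y\<in>F. of_nat CARD('a^'n))"
    by (simp add: sum.delta)
  also have "\<dots> = complex_of_real (real CARD('a^'n) * real (card F))" by simp
  finally show ?thesis unfolding g_def by (simp only: of_real_eq_iff)
qed

lemma W_bound:
  fixes E F :: "('a^'n) set"
  assumes "\<psi> a \<noteq> 1" "t \<noteq> 0" "(2::'a) \<noteq> 0"
  shows "cmod (\<Sum>x\<in>E. \<Sum>y\<in>F. \<psi> (t * sqnorm (x - y))) \<le> sqrt (real (card E)) * sqrt (real CARD('a^'n) * real (card F))"
proof -
  define f where "f x = cmod (\<Sum>y\<in>F. \<psi> (t * sqnorm (x - y)))" for x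
  have "cmod (\<Sum>x\<in>E. \<Sum>y\<in>F. \<psi> (t * sqnorm (x - y))) \<le> (\<Sum>x\<in>E. f x)"
    unfolding f_def by (rule norm_sum)
  also have "\<dots> \<le> sqrt ((\<Sum>x\<in>E. (f x)^2) * card E)"
    using sum_squared_le_sum_of_squares[of f E] real_le_rsqrt by blast
  also have "(\<Sum>x\<in>E. (f x)^2) \<le> (\<Sum>x\<in>UNIV. (f x)^2)"
    by (rule sum_mono2) auto
  also have "(\<Sum>x\<in>UNIV. (f x)^2) = real CARD('a^'n) * real (card F)"
    unfolding f_def by (rule key_sq[OF assms])
  finally show ?thesis
    by (simp add: real_sqrt_mult mult.commute mult_right_mono)
qed

end



lemma nu0_sum:
  fixes E F :: "('a::{finite,comm_ring_1} ^ 'n) set"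
  shows "nu0 E F = (\<Sum>x\<in>E. \<Sum>y\<in>F. (if sqnorm (x - y) = 0 then 1 else 0))"
proof -
  have "{(x, y). x \<in> E \<and> y \<in> F \<and> sqnorm (x - y) = 0} = {z \<in> E \<times> F. sqnorm (fst z - snd z) = 0}"
    by auto
  then have "nu0 E F = card {z \<in> E \<times> F. sqnorm (fst z - snd z) = 0}" unfolding nu0_def by simp
  also have "\<dots> = (\<Sum>z\<in>E \<times> F. if sqnorm (fst z - snd z) = 0 then 1 else 0)"
    by (subst card_eq_sum, rule sum.inter_filter) simp
  also have "\<dots> = (\<Sum>x\<in>E. \<Sum>y\<in>F. (if sqnorm (x - y) = 0 then 1 else 0))"
    unfolding sum.cartesian_product by (simp add: case_prod_unfold)
  finally show ?thesis .
qed


theorem mainTheorem9: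
  fixes E F :: "('a::{finite,field} ^ 'n) set"
  assumes "CHAR('a) > 2"
    and "CARD('n) \<ge> 2" and "even CARD('n)"
  shows "real (nu0 E F) \<le>
           real (card E) * real (card F) / real CARD('a)
           + 2 * real CARD('a) powr (real CARD('n) / 2) * sqrt (real (card E)) * sqrt (real (card F))"
proof -
  obtain \<psi> :: "'a \<Rightarrow> complex" and a where hom: "\<And>x y. \<psi> (x+y) = \<psi> x * \<psi> y"
      and nrm: "\<And>x. norm (\<psi> x) = 1" and nt: "\<psi> a \<noteq> 1"
    using exists_char[OF assms(1)] by blast
  define q where "q = CARD('a)"
  have q0: "q > 0" unfolding q_def by simp
  have two: "(2::'a) \<noteq> 0"
  proof
    assume "(2::'a) = 0"
    then have "(of_nat 2 :: 'a) = 0" by simp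
    then have "CHAR('a) dvd 2" using of_nat_eq_0_iff_char_dvd by blast
    then show False using assms(1) by (auto dest: dvd_imp_le)
  qed
  define W where "W t = (\<Sum>x\<in>E. \<Sum>y\<in>F. \<psi> (t * sqnorm (x - y)))" for t
  define B where "B = sqrt (real (card E)) * sqrt (real CARD('a^'n) * real (card F))"
  have WB: "cmod (W t) \<le> B" if "t \<noteq> 0" for t
    unfolding W_def B_def by (rule W_bound[OF hom nrm nt that two])
  have ind: "(if sqnorm z = 0 then 1 else 0 :: complex) = (\<Sum>t\<in>UNIV. \<psi> (t * sqnorm z)) / of_nat q" for z :: "'a^'n"
    using orth_scalar[OF hom nrm nt, of "sqnorm z"] q0 unfolding q_def by simp
  have "complex_of_nat (nu0 E F) = (\<Sum>x\<in>E. \<Sum>y\<in>F. (if sqnorm (x - y) = 0 then 1 else 0 :: complex))"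
    unfolding nu0_sum of_nat_sum by (intro sum.cong refl) simp
  also have "\<dots> = (\<Sum>x\<in>E. \<Sum>y\<in>F. \<Sum>t\<in>UNIV. \<psi> (t * sqnorm (x - y))) / of_nat q"
    by (simp add: ind sum_divide_distrib)
  also have "(\<Sum>x\<in>E. \<Sum>y\<in>F. \<Sum>t\<in>UNIV. \<psi> (t * sqnorm (x - y))) = (\<Sum>x\<in>E. \<Sum>t\<in>UNIV. \<Sum>y\<in>F. \<psi> (t * sqnorm (x - y)))"
    by (rule sum.cong[OF refl], rule sum.swap)
  also have "\<dots> = (\<Sum>t\<in>UNIV. W t)" unfolding W_def by (rule sum.swap)
  also have "\<dots> = W 0 + (\<Sum>t\<in>UNIV - {0}. W t)" by (rule sum.remove) auto
  also have "W 0 = of_nat (card E * card F)" unfolding W_def by (simp add: psi0[OF hom nrm])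
  finally have eq: "complex_of_nat (nu0 E F) = (of_nat (card E * card F) + (\<Sum>t\<in>UNIV - {0}. W t)) / of_nat q" .
  define R where "R = (\<Sum>t\<in>UNIV - {0}. W t)"
  have "cmod R \<le> (\<Sum>t\<in>UNIV - {0}. cmod (W t))" unfolding R_def by (rule norm_sum)
  also have "\<dots> \<le> of_nat (card (UNIV - {0::'a})) * B" by (rule sum_bounded_above) (use WB in auto)
  also have "card (UNIV - {0::'a}) = q - 1" unfolding q_def by (simp add: card_Diff_singleton)
  finally have RB: "cmod R \<le> real (q - 1) * B" .
  have "real (nu0 E F) = Re (complex_of_nat (nu0 E F))" by simp
  also have "\<dots> = (real (card E * card F) + Re R) / real q" unfolding eq R_def by simp
  also have "\<dots> \<le> (real (card E * card F) + real (q - 1) * B) / real q"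
    using RB complex_Re_le_cmod[of R] q0 by (intro divide_right_mono) auto
  also have "\<dots> \<le> real (card E) * real (card F) / real q + B"
  proof -
    have B0: "B \<ge> 0" unfolding B_def by simp
    have "real (q - 1) \<le> real q" by simp
    then have "real (q - 1) * B \<le> real q * B" using B0 by (rule mult_right_mono)
    then have "real (q - 1) * B \<le> B * real q" by (metis mult.commute)
    then have "real (q - 1) * B / real q \<le> B" using q0 by (simp add: pos_divide_le_eq)
    then show ?thesis by (simp add: add_divide_distrib)
  qed
  also have "B = real CARD('a) powr (real CARD('n) / 2) * sqrt (real (card E)) * sqrt (real (card F))"
  proof -
    have qa: "real CARD('a) > 0" by simp
    have "sqrt (real CARD('a^'n)) = sqrt (real CARD('a) ^ CARD('n))" by simp
    also have "\<dots> = sqrt (real CARD('a) powr real CARD('n))" using powr_realpow[OF qa] by simp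
    also have "\<dots> = real CARD('a) powr (real CARD('n) / 2)" using powr_half_sqrt_powr[of "real CARD('a)" "real CARD('n)"] by simp
    finally have "sqrt (real CARD('a^'n)) = real CARD('a) powr (real CARD('n) / 2)" .
    then show ?thesis unfolding B_def by (simp add: real_sqrt_mult)
  qed
  finally have fin: "real (nu0 E F) \<le> real (card E) * real (card F) / real q + real CARD('a) powr (real CARD('n) / 2) * sqrt (real (card E)) * sqrt (real (card F))" .
  have "0 \<le> real CARD('a) powr (real CARD('n) / 2) * sqrt (real (card E)) * sqrt (real (card F))" by simp
  then show ?thesis using fin unfolding q_def by linarith
qed

end
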